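(* Let $X$ be a topological space and $a\in\mathscr{C}_{\mathrm{a.e.}}(X)$. Then there is a unique representative $a_{\max}\in a$ such that $f=a_{\max}|_{\operatorname{dom}f}$ for all $f\in a$. In particular $\operatorname{dom}a_{\max}\supseteq\operatorname{dom}f$ for all $f\in a$.
   Context: $\mathscr{C}_{\mathrm{a.e.}}(X)$: consider continuous real-valued functions $f$ defined on dense open subsets $\operatorname{dom}f$ of $X$; define $f+g$, $fg$ pointwise on $\operatorname{dom}f\cap\operatorname{dom}g$; $f\approx g$ iff $f|_A=g|_A$ for some dense open $A\subseteq\operatorname{dom}f\cap\operatorname{dom}g$. $\mathscr{C}_{\mathrm{a.e.}}(X)$ is the set of $\approx$-equivalence classes (each element $a$ is thus a set of such functions, its representatives). *)

theory Defs
  imports "HOL-Analysis.Analysis"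
begin

definition dense_open :: "'a::topological_space set \<Rightarrow> bool" where
  "dense_open A \<longleftrightarrow> open A \<and> closure A = UNIV"

definition ae_rep :: "('a::topological_space \<rightharpoonup> real) \<Rightarrow> bool" where
  "ae_rep f \<longleftrightarrow> dense_open (dom f) \<and> continuous_on (dom f) (\<lambda>x. the (f x))"

definition ae_eq :: "('a::topological_space \<rightharpoonup> real) \<Rightarrow> ('a \<rightharpoonup> real) \<Rightarrow> bool" where
  "ae_eq f g \<longleftrightarrow> (\<exists>A. dense_open A \<and> A \<subseteq> dom f \<inter> dom g \<and> (\<forall>x\<in>A. f x = g x))"

definition ae_rel :: "(('a::topological_space \<rightharpoonup> real) \<times> ('a \<rightharpoonup> real)) set" where
  "ae_rel = {(f, g). ae_rep f \<and> ae_rep g \<and> ae_eq f g}"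

definition C_ae :: "('a::topological_space \<rightharpoonup> real) set set" where
  "C_ae = {f. ae_rep f} // ae_rel"

end

theory Submission
  imports Defs
begin

lemma dense_open_Int:
  assumes "dense_open A" "dense_open B" shows "dense_open (A \<inter> B)"
proof -
  have "closure A \<subseteq> closure (A \<inter> B)"
  proof -
    have "A \<inter> closure B \<subseteq> closure (A \<inter> B)"
      using open_Int_closure_subset assms unfolding dense_open_def by blast
    then have "closure (A \<inter> closure B) \<subseteq> closure (A \<inter> B)"
      by (simp add: closure_minimal)
    then show ?thesis using assms unfolding dense_open_def by simp
  qed
  then show ?thesis using assms unfolding dense_open_def by auto
qed

lemma ae_compat:
  assumes f: "ae_rep f" and g: "ae_rep g" and e: "ae_eq f g"
    and x: "x \<in> dom f" "x \<in> dom g"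
  shows "f x = g x"
proof (rule ccontr)
  assume ne: "f x \<noteq> g x"
  obtain A where A: "dense_open A" "A \<subseteq> dom f \<inter> dom g" "\<forall>y\<in>A. f y = g y"
    using e unfolding ae_eq_def by blast
  define U where "U = dom f \<inter> dom g"
  have oU: "open U" using f g unfolding U_def ae_rep_def dense_open_def by auto
  have c: "continuous_on U (\<lambda>y. the (f y) - the (g y))"
  proof (rule continuous_on_diff)
    show "continuous_on U (\<lambda>y. the (f y))"
      using f unfolding ae_rep_def U_def by (rule continuous_on_subset[OF conjunct2]) auto
    show "continuous_on U (\<lambda>y. the (g y))"
      using g unfolding ae_rep_def U_def by (rule continuous_on_subset[OF conjunct2]) auto
  qed
  define V where "V = U \<inter> (\<lambda>y. the (f y) - the (g y)) -` (- {0})"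
  have oV: "open V"
  proof -
    have "open ((\<lambda>y. the (f y) - the (g y)) -` (- {0}) \<inter> U)"
      using c continuous_on_open_vimage[OF oU] by (meson open_Compl closed_singleton)
    then show ?thesis unfolding V_def by (simp add: Int_commute)
  qed
  have "x \<in> V" using ne x unfolding V_def U_def by auto
  moreover have "V \<inter> closure A = UNIV \<inter> V" using A(1) unfolding dense_open_def by auto
  ultimately have "V \<inter> closure A \<noteq> {}" by blast
  then have "V \<inter> A \<noteq> {}" using open_Int_closure_eq_empty[OF oV, of A] by blast
  then obtain y where "y \<in> V" "y \<in> A" by auto
  then have "f y = g y" and "the (f y) - the (g y) \<noteq> 0" using A(3) unfolding V_def by auto
  then show False by simp
qed

theorem proposition16:
  fixes a :: "('a::topological_space \<rightharpoonup> real) set"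
  assumes "a \<in> C_ae"
  shows "(\<exists>!amax. amax \<in> a \<and> (\<forall>f\<in>a. f = amax |` dom f))
    \<and> (\<forall>amax. amax \<in> a \<and> (\<forall>f\<in>a. f = amax |` dom f) \<longrightarrow> (\<forall>f\<in>a. dom f \<subseteq> dom amax))"
proof -
  obtain f0 where f0: "ae_rep f0" and aeq: "a = ae_rel `` {f0}"
    using assms unfolding C_ae_def quotient_def by auto
  have mem: "g \<in> a \<longleftrightarrow> ae_rep g \<and> ae_eq f0 g" for g
    using f0 unfolding aeq ae_rel_def by auto
  have rep: "ae_rep g" if "g \<in> a" for g using mem that by auto
  have comp: "f x = g x" if H: "f \<in> a" "g \<in> a" "x \<in> dom f" "x \<in> dom g" for f g x
  proof -
    obtain A where A: "dense_open A" "A \<subseteq> dom f0 \<inter> dom f" "\<forall>y\<in>A. f0 y = f y"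
      using mem H(1) unfolding ae_eq_def by blast
    obtain B where B: "dense_open B" "B \<subseteq> dom f0 \<inter> dom g" "\<forall>y\<in>B. f0 y = g y"
      using mem H(2) unfolding ae_eq_def by blast
    have "ae_eq f g" unfolding ae_eq_def
      using dense_open_Int[OF A(1) B(1)] A B by (intro exI[of _ "A \<inter> B"]) auto
    then show ?thesis using ae_compat rep H by blast
  qed
  have f0a: "f0 \<in> a" using mem f0 unfolding ae_eq_def ae_rep_def by auto
  define amax where "amax x = (if \<exists>f\<in>a. x \<in> dom f then (SOME f. f \<in> a \<and> x \<in> dom f) x else None)" for x
  have amx: "amax x = f x" if "f \<in> a" "x \<in> dom f" for f x
  proof -
    have "(SOME f. f \<in> a \<and> x \<in> dom f) \<in> a \<and> x \<in> dom (SOME f. f \<in> a \<and> x \<in> dom f)"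
      by (rule someI[of _ f]) (use that in auto)
    then show ?thesis unfolding amax_def using that comp by auto
  qed
  have domx: "dom amax = \<Union> (dom ` a)"
  proof
    show "dom amax \<subseteq> \<Union> (dom ` a)" unfolding amax_def dom_def by (auto split: if_splits)
    show "\<Union> (dom ` a) \<subseteq> dom amax" using amx by (auto simp: dom_def)
  qed
  have restr: "f = amax |` dom f" if "f \<in> a" for f
  proof
    fix x show "f x = (amax |` dom f) x"
      using amx[OF that] by (cases "x \<in> dom f") (auto simp: restrict_map_def dom_def)
  qed
  have "ae_rep amax"
    unfolding ae_rep_def dense_open_def
  proof (intro conjI)
    show "open (dom amax)" unfolding domx using rep unfolding ae_rep_def dense_open_def by auto
    have "closure (dom f0) \<subseteq> closure (dom amax)" using f0a domx by (intro closure_mono) auto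
    then show "closure (dom amax) = UNIV" using f0 unfolding ae_rep_def dense_open_def by auto
    show "continuous_on (dom amax) (\<lambda>x. the (amax x))" unfolding domx
    proof (rule continuous_on_open_Union)
      fix S assume "S \<in> dom ` a"
      then obtain f where f: "f \<in> a" "S = dom f" by auto
      then show "open S" using rep unfolding ae_rep_def dense_open_def by auto
      have "continuous_on (dom f) (\<lambda>x. the (f x))" using rep f unfolding ae_rep_def by auto
      then show "continuous_on S (\<lambda>x. the (amax x))"
        using f amx by (metis (no_types, lifting) continuous_on_cong)
    qed
  qed
  moreover have "ae_eq f0 amax" unfolding ae_eq_def
    using f0 f0a amx domx unfolding ae_rep_def by (intro exI[of _ "dom f0"]) auto
  ultimately have ain: "amax \<in> a" using mem by auto
  have ex: "\<exists>!amax. amax \<in> a \<and> (\<forall>f\<in>a. f = amax |` dom f)"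
  proof (rule ex1I[of _ amax])
    show "amax \<in> a \<and> (\<forall>f\<in>a. f = amax |` dom f)" using ain restr by auto
    fix m assume m: "m \<in> a \<and> (\<forall>f\<in>a. f = m |` dom f)"
    then have 1: "m = amax |` dom m" using restr by auto
    have 2: "amax = m |` dom amax" using m ain by auto
    show "m = amax"
    proof
      fix x show "m x = amax x"
        using fun_cong[OF 1, of x] fun_cong[OF 2, of x]
        by (auto simp: restrict_map_def dom_def split: if_splits)
    qed
  qed
  have "\<forall>m. m \<in> a \<and> (\<forall>f\<in>a. f = m |` dom f) \<longrightarrow> (\<forall>f\<in>a. dom f \<subseteq> dom m)"
  proof (intro allI impI ballI)
    fix m f assume m: "m \<in> a \<and> (\<forall>f\<in>a. f = m |` dom f)" and f: "f \<in> a"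
    then have "f = m |` dom f" by auto
    then have "dom f = dom (m |` dom f)" by simp
    then show "dom f \<subseteq> dom m" by auto
  qed
  with ex show ?thesis by blast
qed

end
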